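(* Let $(A,v)$ and $(B,w)$ be valued abelian groups and let $f:A\to B$ be a group homomorphism. Assume there is a subset $S\subseteq A$ such that: (a) the assignment $vs\mapsto wf(s)$ for $s\in S$ defines an order preserving map $\varphi:v(S)\to w(B)$; that is, for $s,s'\in S$, $vs=vs'$ implies $wf(s)=wf(s')$, and $vs<vs'$ implies $wf(s)<wf(s')$; (b) for all $a\in A$ and $s\in S$: if $va\ge vs$ then $wf(a)\ge wf(s)$; (c) for every $b\in B\setminus\{0\}$ there is some $s\in S$ with $w(b-f(s))>wb$. Suppose further that $(A,v)$ is spherically complete. Then $f$ is surjective and $(B,w)$ is spherically complete.
   Context: A valued abelian group $(A,v)$ is an abelian group $A$ with a map $v:A\to \Gamma\cup\{\infty\}$, $a\mapsto va$, onto a totally ordered set with largest element $\infty$, such that $va=\infty\iff a=0$ and $v(a-a')\ge\min\{va,va'\}$ for all $a,a'\in A$. For $X\subseteq A$ write $v(X)=\{vx\mid x\in X\}$. For $a\in A$ and $\alpha\in v(A)$ the ball is $B_\alpha(a)=\{a'\in A\mid v(a-a')\ge\alpha\}$. A nest of balls is a set of balls totally ordered by inclusion; $(A,v)$ is spherically complete if every nest of balls has nonempty intersection. *)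

theory Defs
  imports Main
begin

text \<open>A valued abelian group: the group is the type 'a (class ab_group_add), the value
  set is (a subset of) a linearly ordered type 'g whose top element plays the role of
  infinity.\<close>

definition valued_group :: "('a::ab_group_add \<Rightarrow> 'g::{linorder,order_top}) \<Rightarrow> bool" where
  "valued_group v \<longleftrightarrow>
     (\<forall>a. v a = top \<longleftrightarrow> a = 0) \<and>
     (\<forall>a a'. v (a - a') \<ge> min (v a) (v a'))"

definition vball :: "('a::ab_group_add \<Rightarrow> 'g::linorder) \<Rightarrow> 'g \<Rightarrow> 'a \<Rightarrow> 'a set" where
  "vball v \<alpha> a = {a'. v (a - a') \<ge> \<alpha>}"

definition is_ball :: "('a::ab_group_add \<Rightarrow> 'g::linorder) \<Rightarrow> 'a set \<Rightarrow> bool" where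
  "is_ball v X \<longleftrightarrow> (\<exists>a \<alpha>. \<alpha> \<in> range v \<and> X = vball v \<alpha> a)"

definition nest_of_balls :: "('a::ab_group_add \<Rightarrow> 'g::linorder) \<Rightarrow> 'a set set \<Rightarrow> bool" where
  "nest_of_balls v N \<longleftrightarrow> (\<forall>X\<in>N. is_ball v X) \<and> (\<forall>X\<in>N. \<forall>Y\<in>N. X \<subseteq> Y \<or> Y \<subseteq> X)"

definition spherically_complete :: "('a::ab_group_add \<Rightarrow> 'g::linorder) \<Rightarrow> bool" where
  "spherically_complete v \<longleftrightarrow> (\<forall>N. nest_of_balls v N \<longrightarrow> \<Inter>N \<noteq> {})"

end

theory Submission imports Defs begin

lemma max_nest':
  fixes U :: "'x set set"
  obtains N where "N \<subseteq> U" "\<forall>X\<in>N. \<forall>Y\<in>N. X \<subseteq> Y \<or> Y \<subseteq> X"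
     "\<forall>Z\<in>U. (\<forall>X\<in>N. Z \<subseteq> X) \<longrightarrow> Z \<in> N"
proof -
  define A where "A = {N. N \<subseteq> U \<and> (\<forall>X\<in>N. \<forall>Y\<in>N. X \<subseteq> Y \<or> Y \<subseteq> X)}"
  have "\<forall>C\<in>chains A. \<Union>C \<in> A"
  proof
    fix C assume C: "C \<in> chains A"
    have CA: "C \<subseteq> A" using chainsD2[OF C] .
    have h1: "\<Union>C \<subseteq> U" using CA unfolding A_def by blast
    have h2: "\<forall>X\<in>\<Union>C. \<forall>Y\<in>\<Union>C. X \<subseteq> Y \<or> Y \<subseteq> X"
    proof (intro ballI)
      fix X Y assume "X \<in> \<Union>C" "Y \<in> \<Union>C"
      then obtain N1 N2 where n: "N1 \<in> C" "N2 \<in> C" "X \<in> N1" "Y \<in> N2" by auto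
      have c12: "N1 \<subseteq> N2 \<or> N2 \<subseteq> N1" using chainsD[OF C n(1) n(2)] .
      show "X \<subseteq> Y \<or> Y \<subseteq> X"
      proof (cases "N1 \<subseteq> N2")
        case True
        then have "X \<in> N2" using n(3) by blast
        moreover have "N2 \<in> A" using CA n(2) by blast
        ultimately show ?thesis using n(4) unfolding A_def by blast
      next
        case False then have "N2 \<subseteq> N1" using c12 by blast
        then have "Y \<in> N1" using n(4) by blast
        moreover have "N1 \<in> A" using CA n(1) by blast
        ultimately show ?thesis using n(3) unfolding A_def by blast
      qed
    qed
    show "\<Union>C \<in> A" unfolding A_def using h1 h2 by blast
  qed
  from Zorn_Lemma[OF this] obtain M where M: "M \<in> A" and mx: "\<forall>X\<in>A. M \<subseteq> X \<longrightarrow> X = M"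
    by (elim bexE)
  have M1: "M \<subseteq> U" and M2: "\<forall>X\<in>M. \<forall>Y\<in>M. X \<subseteq> Y \<or> Y \<subseteq> X" using M unfolding A_def by auto
  show thesis
  proof (rule that[OF M1 M2])
    show "\<forall>Z\<in>U. (\<forall>X\<in>M. Z \<subseteq> X) \<longrightarrow> Z \<in> M"
    proof (intro ballI impI)
      fix Z assume Z: "Z \<in> U" "\<forall>X\<in>M. Z \<subseteq> X"
      have "insert Z M \<subseteq> U" using M1 Z(1) by simp
      moreover have "\<forall>X\<in>insert Z M. \<forall>Y\<in>insert Z M. X \<subseteq> Y \<or> Y \<subseteq> X"
        using M2 Z(2) by auto
      ultimately have "insert Z M \<in> A" unfolding A_def by simp
      then have "insert Z M = M" using mx by blast
      then show "Z \<in> M" by blast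
    qed
  qed
qed

lemma vg_top: "valued_group v \<Longrightarrow> v a = top \<longleftrightarrow> a = 0"
  by (simp add: valued_group_def)
lemma vg_sub: "valued_group v \<Longrightarrow> v (a - b) \<ge> min (v a) (v b)"
  by (simp add: valued_group_def)
lemma vg_neg: assumes "valued_group v" shows "v (- a) = v a"
proof -
  have "v (0 - a) \<ge> min (v 0) (v a)" "v (0 - (-a)) \<ge> min (v 0) (v (-a))"
    using vg_sub[OF assms] by blast+
  moreover have "v 0 = top" using vg_top[OF assms] by simp
  ultimately show ?thesis by (simp add: order_antisym)
qed
lemma vg_comm: assumes "valued_group v" shows "v (a - b) = v (b - a)"
  using vg_neg[OF assms, of "a - b"] by simp
lemma vg_add: assumes "valued_group v" shows "v (a + b) \<ge> min (v a) (v b)"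
  using vg_sub[OF assms, of a "-b"] vg_neg[OF assms, of b] by simp
lemma vg_tri: assumes "valued_group v" shows "v (a - c) \<ge> min (v (a - b)) (v (b - c))"
  using vg_add[OF assms, of "a - b" "b - c"] by simp
lemma vg_eq: assumes "valued_group v" "v (y - z) > v y" shows "v z = v y"
proof -
  have 1: "v z \<ge> min (v y) (v (y - z))" using vg_sub[OF assms(1), of y "y - z"] by simp
  have 2: "v y \<ge> min (v z) (v (y - z))" using vg_add[OF assms(1), of z "y - z"] by simp
  show ?thesis using 1 2 assms(2) by (auto simp: min_def split: if_splits)
qed

lemma vg_tri_ge: assumes "valued_group v" "\<alpha> \<le> v (a - b)" "\<alpha> \<le> v (b - c)" shows "\<alpha> \<le> v (a - c)"
proof -
  have "\<alpha> \<le> min (v (a - b)) (v (b - c))" using assms(2,3) by simp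
  then show ?thesis using vg_tri[OF assms(1), of a b c] by (rule order_trans)
qed
lemma vg_sub_ge: assumes "valued_group v" "\<alpha> \<le> v a" "\<alpha> \<le> v b" shows "\<alpha> \<le> v (a - b)"
proof -
  have "\<alpha> \<le> min (v a) (v b)" using assms(2,3) by simp
  then show ?thesis using vg_sub[OF assms(1), of a b] by (rule order_trans)
qed
lemma vball_top: assumes "valued_group v" shows "vball v top c = {c}"
proof -
  have "v 0 = top" using vg_top[OF assms] by simp
  then show ?thesis unfolding vball_def using vg_top[OF assms] by (auto simp: top_unique)
qed
lemma vball_center: assumes "valued_group v" shows "c \<in> vball v \<gamma> c"
proof -
  have "v 0 = top" using vg_top[OF assms] by simp
  then show ?thesis by (simp add: vball_def)
qed

theorem mainTheorem1:
  fixes v :: "'a::ab_group_add \<Rightarrow> 'g::{linorder,order_top}"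
    and w :: "'b::ab_group_add \<Rightarrow> 'h::{linorder,order_top}"
    and f :: "'a \<Rightarrow> 'b"
    and S :: "'a set"
  assumes vA: "valued_group v"
    and wB: "valued_group w"
    and hom: "\<And>x y. f (x + y) = f x + f y"
    and a_eq: "\<And>s s'. s \<in> S \<Longrightarrow> s' \<in> S \<Longrightarrow> v s = v s' \<Longrightarrow> w (f s) = w (f s')"
    and a_less: "\<And>s s'. s \<in> S \<Longrightarrow> s' \<in> S \<Longrightarrow> v s < v s' \<Longrightarrow> w (f s) < w (f s')"
    and b: "\<And>a s. s \<in> S \<Longrightarrow> v a \<ge> v s \<Longrightarrow> w (f a) \<ge> w (f s)"
    and c: "\<And>y. y \<noteq> 0 \<Longrightarrow> \<exists>s\<in>S. w (y - f s) > w y"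
    and sc: "spherically_complete v"
  shows "surj f \<and> spherically_complete w"
proof -
  have f0: "f 0 = 0" using hom[of 0 0] by simp
  have fsub: "f (x - y) = f x - f y" for x y
  proof -
    have "f x = f (x - y) + f y" using hom[of "x - y" y] by simp
    then show ?thesis by (simp add: eq_diff_eq)
  qed
  have fneg: "f (- x) = - f x" for x using fsub[of 0 x] f0 by simp
  have mono_lt: "v s < v s'" if "s \<in> S" "s' \<in> S" "w (f s) < w (f s')" for s s'
  proof (rule ccontr)
    assume "\<not> v s < v s'"
    then have "v s' \<le> v s" by simp
    then have "w (f s') \<le> w (f s)" by (rule b[OF that(2)])
    with that(3) show False by simp
  qed
  have mono_le: "v s \<le> v s'" if "s \<in> S" "s' \<in> S" "w (f s) \<le> w (f s')" for s s'
  proof (rule ccontr)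
    assume "\<not> v s \<le> v s'"
    then have "v s' < v s" by simp
    then have "w (f s') < w (f s)" by (rule a_less[OF that(2,1)])
    with that(3) show False by simp
  qed
  have rad: "\<exists>s\<in>S. w (f s) = w y" if "y \<noteq> 0" for y
    using c[OF that] vg_eq[OF wB] by blast
  have KL: "\<exists>a. v a \<ge> v s0 \<and> f a = bb" if s0: "s0 \<in> S" and wb: "w bb \<ge> w (f s0)" for s0 bb
  proof (rule ccontr)
    assume ne: "\<not> (\<exists>a. v a \<ge> v s0 \<and> f a = bb)"
    define R where "R = vball v (v s0) 0"
    have inR: "a \<in> R \<longleftrightarrow> v a \<ge> v s0" for a using vg_neg[OF vA, of a] by (simp add: R_def vball_def)
    define sel where "sel a = (SOME s. s \<in> S \<and> w (bb - f a - f s) > w (bb - f a))" for a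
    have sel: "sel a \<in> S \<and> w (bb - f a - f (sel a)) > w (bb - f a)" if "a \<in> R" for a
    proof -
      have "bb - f a \<noteq> 0" using ne inR that by auto
      from c[OF this] have "\<exists>s. s \<in> S \<and> w (bb - f a - f s) > w (bb - f a)" by blast
      then show ?thesis unfolding sel_def by (rule someI_ex)
    qed
    have selw: "w (f (sel a)) = w (bb - f a)" if "a \<in> R" for a
      using sel[OF that] vg_eq[OF wB] by blast
    have distR: "w (bb - f a) \<ge> w (f s0)" if "a \<in> R" for a
    proof -
      have "w (f a) \<ge> w (f s0)" using b[OF s0] inR that by blast
      then show ?thesis using vg_sub_ge[OF wB] wb by blast
    qed
    have selge: "v (sel a) \<ge> v s0" if "a \<in> R" for a
      using mono_le[OF s0, of "sel a"] sel[OF that] selw[OF that] distR[OF that] by simp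
    define Bl where "Bl a = vball v (v (sel a)) a" for a
    have P3: "Bl a \<subseteq> R" if "a \<in> R" for a
    proof
      fix x assume "x \<in> Bl a"
      then have "v (a - x) \<ge> v s0" using selge[OF that] by (auto simp: Bl_def vball_def)
      moreover have "v (0 - a) \<ge> v s0" using that vg_neg[OF vA, of a] inR by simp
      ultimately have "v (0 - x) \<ge> v s0" using vg_tri_ge[OF vA] by blast
      then show "x \<in> R" by (simp add: R_def vball_def)
    qed
    have P4: "Bl a' \<subseteq> Bl a" if a: "a \<in> R" and a': "a' \<in> Bl a" for a a'
    proof -
      have a'R: "a' \<in> R" using P3[OF a] a' by blast
      have d: "v (a - a') \<ge> v (sel a)" using a' by (simp add: Bl_def vball_def)
      have "w (f (a - a')) \<ge> w (f (sel a))" using b[OF _ d] sel[OF a] by blast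
      then have "w (f a - f a') \<ge> w (bb - f a)" using selw[OF a] fsub by simp
      then have "w (bb - f a') \<ge> w (bb - f a)" using vg_tri_ge[OF wB, of _ bb "f a" "f a'"] by blast
      then have "w (f (sel a')) \<ge> w (f (sel a))" using selw[OF a] selw[OF a'R] by simp
      then have le: "v (sel a') \<ge> v (sel a)" using mono_le sel[OF a] sel[OF a'R] by blast
      show ?thesis
      proof
        fix x assume "x \<in> Bl a'"
        then have "v (a' - x) \<ge> v (sel a)" using le by (auto simp: Bl_def vball_def)
        then have "v (a - x) \<ge> v (sel a)" using d vg_tri_ge[OF vA] by blast
        then show "x \<in> Bl a" by (simp add: Bl_def vball_def)
      qed
    qed
    have P5: "a + sel a \<in> Bl a \<and> a \<notin> Bl (a + sel a)" if a: "a \<in> R" for a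
    proof -
      have 1: "a + sel a \<in> Bl a" using vg_neg[OF vA, of "sel a"] by (simp add: Bl_def vball_def)
      then have R2: "a + sel a \<in> R" using P3[OF a] by blast
      have "w (bb - f (a + sel a)) > w (bb - f a)" using sel[OF a] hom by (simp add: diff_diff_eq)
      then have "w (f (sel (a + sel a))) > w (f (sel a))" using selw[OF a] selw[OF R2] by simp
      then have "v (sel (a + sel a)) > v (sel a)" using mono_lt sel[OF a] sel[OF R2] by blast
      then have "a \<notin> Bl (a + sel a)" by (simp add: Bl_def vball_def)
      with 1 show ?thesis by blast
    qed
    obtain N where N: "N \<subseteq> Bl ` R" "\<forall>X\<in>N. \<forall>Y\<in>N. X \<subseteq> Y \<or> Y \<subseteq> X"
      "\<forall>Z\<in>Bl ` R. (\<forall>X\<in>N. Z \<subseteq> X) \<longrightarrow> Z \<in> N"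
      by (rule max_nest')
    have "nest_of_balls v (insert R N)"
      unfolding nest_of_balls_def
    proof (intro conjI ballI)
      fix X assume "X \<in> insert R N"
      then show "is_ball v X"
      proof
        assume "X = R" then show ?thesis by (auto simp: is_ball_def R_def)
      next
        assume "X \<in> N" then obtain a where "X = Bl a" using N(1) by blast
        then show ?thesis by (auto simp: is_ball_def Bl_def)
      qed
    next
      fix X Y assume "X \<in> insert R N" "Y \<in> insert R N"
      moreover have "\<forall>X\<in>N. X \<subseteq> R" using N(1) P3 by blast
      ultimately show "X \<subseteq> Y \<or> Y \<subseteq> X" using N(2) by blast
    qed
    then obtain a where a: "a \<in> R" "\<forall>X\<in>N. a \<in> X"
      using sc unfolding spherically_complete_def by blast
    have a'R: "a + sel a \<in> R" using P5[OF a(1)] P3[OF a(1)] by blast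
    have "Bl (a + sel a) \<in> N"
    proof -
      have "\<forall>X\<in>N. Bl (a + sel a) \<subseteq> X"
      proof
        fix X assume X: "X \<in> N"
        then obtain a0 where a0: "a0 \<in> R" "X = Bl a0" using N(1) by blast
        have "Bl a \<subseteq> X" using P4[OF a0(1)] a(2) X a0(2) by blast
        moreover have "Bl (a + sel a) \<subseteq> Bl a" using P4[OF a(1)] P5[OF a(1)] by blast
        ultimately show "Bl (a + sel a) \<subseteq> X" by blast
      qed
      then show ?thesis using N(3) a'R by blast
    qed
    then show False using a(2) P5[OF a(1)] by blast
  qed
  have surj: "surj f"
  proof -
    have "y \<in> range f" for y
    proof (cases "y = 0")
      case True then show ?thesis using f0 by (metis rangeI)
    next
      case False
      then obtain s where "s \<in> S" "w (f s) = w y" using rad by blast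
      then obtain a where "f a = y" using KL[of s y] by auto
      then show ?thesis by blast
    qed
    then show ?thesis by blast
  qed
  have img: "f ` vball v (v s) a = vball w (w (f s)) (f a)" if s: "s \<in> S" for s a
  proof
    show "f ` vball v (v s) a \<subseteq> vball w (w (f s)) (f a)"
    proof
      fix y assume "y \<in> f ` vball v (v s) a"
      then obtain x where "y = f x" "v (a - x) \<ge> v s" by (auto simp: vball_def)
      then show "y \<in> vball w (w (f s)) (f a)" using b[OF s, of "a - x"] fsub[of a x] by (auto simp: vball_def)
    qed
  next
    show "vball w (w (f s)) (f a) \<subseteq> f ` vball v (v s) a"
    proof
      fix y assume "y \<in> vball w (w (f s)) (f a)"
      then have "w (f a - y) \<ge> w (f s)" by (simp add: vball_def)
      then obtain d where d: "v d \<ge> v s" "f d = f a - y" using KL[OF s] by blast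
      have "f (a - d) = y" using d fsub by simp
      moreover have "a - d \<in> vball v (v s) a" using d by (simp add: vball_def)
      ultimately show "y \<in> f ` vball v (v s) a" by (metis imageI)
    qed
  qed
  have "spherically_complete w"
    unfolding spherically_complete_def
  proof (intro allI impI)
    fix N assume nest: "nest_of_balls w N"
    have ballsN: "\<exists>c \<gamma>. \<gamma> \<in> range w \<and> X = vball w \<gamma> c" if "X \<in> N" for X
      using nest that by (auto simp: nest_of_balls_def is_ball_def)
    have cmpN: "X \<subseteq> Y \<or> Y \<subseteq> X" if "X \<in> N" "Y \<in> N" for X Y
      using nest that by (auto simp: nest_of_balls_def)
    show "\<Inter>N \<noteq> {}"
    proof (cases "\<exists>c. {c} \<in> N")
      case True
      then obtain c where c1: "{c} \<in> N" by blast
      have "c \<in> X" if X: "X \<in> N" for X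
      proof -
        obtain c' \<gamma> where "X = vball w \<gamma> c'" using ballsN[OF X] by blast
        then have "c' \<in> X" using vball_center[OF wB] by blast
        then show ?thesis using cmpN[OF X c1] by blast
      qed
      then show ?thesis by blast
    next
      case False
      then have radN: "\<gamma> \<noteq> top" if "X \<in> N" "X = vball w \<gamma> c" for X \<gamma> c
        using that vball_top[OF wB] by metis
      define BA where "BA = {Y. \<exists>s\<in>S. \<exists>a. Y = vball v (v s) a}"
      obtain M where M: "M \<subseteq> {Y \<in> BA. f ` Y \<in> N}" "\<forall>X\<in>M. \<forall>Y\<in>M. X \<subseteq> Y \<or> Y \<subseteq> X"
        "\<forall>Z\<in>{Y \<in> BA. f ` Y \<in> N}. (\<forall>X\<in>M. Z \<subseteq> X) \<longrightarrow> Z \<in> M"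
        by (rule max_nest')
      have "nest_of_balls v M"
        unfolding nest_of_balls_def
      proof (intro conjI ballI)
        fix X assume "X \<in> M"
        then obtain s a where "X = vball v (v s) a" using M(1) by (auto simp: BA_def)
        then show "is_ball v X" unfolding is_ball_def by blast
      next
        fix X Y assume "X \<in> M" "Y \<in> M" then show "X \<subseteq> Y \<or> Y \<subseteq> X" using M(2) by blast
      qed
      then obtain as where as: "\<forall>Y\<in>M. as \<in> Y"
        using sc unfolding spherically_complete_def by blast
      have "f as \<in> X" if X: "X \<in> N" for X
      proof (rule ccontr)
        assume nX: "f as \<notin> X"
        have hYX: "X \<subseteq> f ` Y \<and> X \<noteq> f ` Y" if Y: "Y \<in> M" for Y
        proof -
          have "f ` Y \<in> N" using M(1) Y by blast
          moreover have "f as \<in> f ` Y" using as Y by blast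
          ultimately show ?thesis using cmpN[OF X] nX by blast
        qed
        obtain cc \<gamma> where g: "\<gamma> \<in> range w" "X = vball w \<gamma> cc" using ballsN[OF X] by blast
        have gt: "\<gamma> \<noteq> top" using radN[OF X g(2)] .
        obtain y where "\<gamma> = w y" using g(1) by blast
        then have "y \<noteq> 0" using gt vg_top[OF wB] by auto
        then obtain sX where sX: "sX \<in> S" "w (f sX) = \<gamma>" using rad \<open>\<gamma> = w y\<close> by metis
        have ccX: "cc \<in> X" using g(2) vball_center[OF wB] by blast
        have reprM: "\<exists>sY aY. sY \<in> S \<and> Y = vball v (v sY) aY" if "Y \<in> M" for Y
          using M(1) that unfolding BA_def by blast
        obtain a where fa: "f a = cc" and aM: "\<forall>Y\<in>M. a \<in> Y"
        proof (cases "cc = f as")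
          case True then show ?thesis using that[of as] as by simp
        next
          case False
          define d where "d = cc - f as"
          have "d \<noteq> 0" using False by (simp add: d_def)
          then obtain s where s: "s \<in> S" "w (f s) = w d" using rad by blast
          then obtain a' where a': "v a' \<ge> v s" "f a' = d" using KL[OF s(1)] by auto
          have "f (as + a') = cc" using hom a'(2) by (simp add: d_def)
          moreover have "as + a' \<in> Y" if Y: "Y \<in> M" for Y
          proof -
            obtain sY aY where Yr: "sY \<in> S" "Y = vball v (v sY) aY" using reprM[OF Y] by blast
            have fY: "f ` Y = vball w (w (f sY)) (f aY)" using img[OF Yr(1)] Yr(2) by simp
            have "cc \<in> f ` Y" using hYX[OF Y] ccX by blast
            then have 1: "w (f aY - cc) \<ge> w (f sY)" using fY by (simp add: vball_def)
            have "f as \<in> f ` Y" using as Y by blast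
            then have 2: "w (f aY - f as) \<ge> w (f sY)" using fY by (simp add: vball_def)
            have "w (cc - f aY) \<ge> w (f sY)" using 1 vg_comm[OF wB] by metis
            then have "w (cc - f as) \<ge> w (f sY)" using 2 vg_tri_ge[OF wB, of "w (f sY)" cc "f aY" "f as"] by blast
            then have "w d \<ge> w (f sY)" by (simp add: d_def)
            then have vs: "v s \<ge> v sY" using mono_le[OF Yr(1) s(1)] s(2) by simp
            have "as \<in> Y" using as Y by blast
            then have 3: "v (aY - as) \<ge> v sY" using Yr(2) by (simp add: vball_def)
            have e: "as - (as + a') = - a'" by simp
            have "v (- a') \<ge> v sY" using vg_neg[OF vA, of a'] a'(1) vs by simp
            then have "v (as - (as + a')) \<ge> v sY" by (simp only: e)
            then have "v (aY - (as + a')) \<ge> v sY" using 3 vg_tri_ge[OF vA, of "v sY" aY as "as + a'"] by blast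
            then show ?thesis using Yr(2) by (simp add: vball_def)
          qed
          ultimately show ?thesis using that[of "as + a'"] by blast
        qed
        define Z where "Z = vball v (v sX) a"
        have fZ: "f ` Z = X" using img[OF sX(1), of a] sX(2) fa g(2) by (simp add: Z_def)
        have "Z \<in> BA" unfolding BA_def Z_def using sX(1) by blast
        then have ZBA: "Z \<in> {Y \<in> BA. f ` Y \<in> N}" using fZ X by simp
        have "Z \<subseteq> Y" if Y: "Y \<in> M" for Y
        proof -
          obtain sY aY where Yr: "sY \<in> S" "Y = vball v (v sY) aY" using reprM[OF Y] by blast
          have fY: "f ` Y = vball w (w (f sY)) (f aY)" using img[OF Yr(1)] Yr(2) by simp
          have "\<gamma> \<ge> w (f sY)"
          proof (rule ccontr)
            assume "\<not> \<gamma> \<ge> w (f sY)"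
            then have lt: "\<gamma> < w (f sY)" by simp
            have "f ` Y \<subseteq> X"
            proof
              fix y assume "y \<in> f ` Y"
              then have 1: "w (f aY - y) \<ge> w (f sY)" using fY by (simp add: vball_def)
              have "cc \<in> f ` Y" using hYX[OF Y] ccX by blast
              then have "w (f aY - cc) \<ge> w (f sY)" using fY by (simp add: vball_def)
              then have "w (cc - f aY) \<ge> w (f sY)" using vg_comm[OF wB] by metis
              then have "w (cc - y) \<ge> w (f sY)" using 1 vg_tri_ge[OF wB, of "w (f sY)" cc "f aY" y] by blast
              then have "\<gamma> \<le> w (cc - y)" using lt by (meson less_imp_le order_trans)
              then show "y \<in> X" using g(2) by (simp add: vball_def)
            qed
            then show False using hYX[OF Y] by blast
          qed
          then have le: "v sX \<ge> v sY" using mono_le[OF Yr(1) sX(1)] sX(2) by simp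
          have "a \<in> Y" using aM Y by blast
          then have aY: "v (aY - a) \<ge> v sY" using Yr(2) by (simp add: vball_def)
          show ?thesis
          proof
            fix z assume "z \<in> Z"
            then have "v (a - z) \<ge> v sX" by (simp add: Z_def vball_def)
            then have "v (a - z) \<ge> v sY" using le by (meson order_trans)
            then have "v (aY - z) \<ge> v sY" using aY vg_tri_ge[OF vA, of "v sY" aY a z] by blast
            then show "z \<in> Y" using Yr(2) by (simp add: vball_def)
          qed
        qed
        then have "Z \<in> M" using M(3) ZBA by blast
        then show False using hYX[of Z] fZ by blast
      qed
      then show ?thesis by blast
    qed
  qed
  with surj show ?thesis by blast
qed

end
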